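(* Suppose the system is exponentially incrementally input/output-to-state stable as in the context, with constant $\eta\in[0,1)$. Let $Q,R\succ0$, let the stage cost be $l(x,w;(u,y))=|w|_Q^2+|y-h(x,u)|_R^2$, and let $t_1\le t_2$ be nonnegative integers. Then there exist $C_1,C_2,C_3>0$ such that $$|x_\tau-\hat x_\tau|^2\le C_1\eta^{\tau-t_1}|x_{t_1}-\hat x_{t_1}|^2+C_2\max_{j\in\{t_1,\dots,\tau-1\}}\{|w_j|^2,|v_j|^2\}+C_3J_{[t_1,t_2]}(\hat z_{t_1:t_2})$$ for all $\tau\in\{t_1,\dots,t_2\}$, all initial conditions $x_0,\hat x_0\in\mathcal{X}$, and all sequences $u\in\mathcal{U}^\infty$, $w,\hat w\in\mathcal{W}^\infty$, $v\in\mathcal{V}^\infty$, where $x_{j+1}=f(x_j,u_j,w_j)$, $y_j=h(x_j,u_j)+v_j$, $\hat x_{j+1}=f(\hat x_j,u_j,\hat w_j)$, $\hat z_j=(\hat x_j,\hat w_j)$ for all $j\ge0$ (the maximum over an empty index set, i.e. for $\tau=t_1$, is $0$).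
   Context: System: $x_{t+1}=f(x_t,u_t,w_t)$, $y_t=h(x_t,u_t)+v_t$ with $f,h$ continuous and known sets $\mathcal{X}\subseteq\mathbb{R}^n$, $\mathcal{U}$, $\mathcal{W}\ni0$, $\mathcal{V}$ with $f(\mathcal{X}\times\mathcal{U}\times\mathcal{W})\subseteq\mathcal{X}$; $d_j=(u_j,y_j)$. Performance criterion: $J_{[t_1,t_2]}(\hat z_{t_1:t_2})=\sum_{j=t_1}^{t_2-1}l(\hat z_j;d_j)$. $|x|_Q^2=x^\top Qx$. Exponential i-IOSS (assumed): there exist a continuous $U:\mathcal{X}\times\mathcal{X}\to\mathbb{R}_{\ge0}$, matrices $P_1,P_2,S_w,S_y\succ0$ and $\eta\in[0,1)$ such that $|x_1-x_2|_{P_1}^2\le U(x_1,x_2)\le|x_1-x_2|_{P_2}^2$ and $U(f(x_1,u,w_1),f(x_2,u,w_2))\le\eta U(x_1,x_2)+|w_1-w_2|_{S_w}^2+|h(x_1,u)-h(x_2,u)|_{S_y}^2$ for all $(x_1,u,w_1),(x_2,u,w_2)\in\mathcal{X}\times\mathcal{U}\times\mathcal{W}$. *)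

theory Defs
  imports "HOL-Analysis.Analysis"
begin

definition qnorm2 :: "real^'n^'n \<Rightarrow> real^'n \<Rightarrow> real" where
  "qnorm2 Q x = x \<bullet> (Q *v x)"

definition posdef :: "real^'n^'n \<Rightarrow> bool" where
  "posdef Q \<longleftrightarrow> transpose Q = Q \<and> (\<forall>x. x \<noteq> 0 \<longrightarrow> qnorm2 Q x > 0)"

definition noise_max :: "(nat \<Rightarrow> 'a::real_normed_vector) \<Rightarrow> (nat \<Rightarrow> 'b::real_normed_vector)
     \<Rightarrow> nat \<Rightarrow> nat \<Rightarrow> real" where
  "noise_max w v t1 tau =
     (if tau \<le> t1 then 0
      else Max ((\<lambda>j. (norm (w j))^2) ` {t1..<tau} \<union> (\<lambda>j. (norm (v j))^2) ` {t1..<tau}))"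

end

theory Submission imports Defs begin

lemma qnorm2_upper: "\<exists>K\<ge>0. \<forall>z. \<bar>qnorm2 (S::real^'n^'n) z\<bar> \<le> K * (norm z)^2"
proof -
  obtain K where K: "K > 0" "\<And>z. norm (S *v z) \<le> norm z * K"
    using bounded_linear.pos_bounded[OF matrix_vector_mul_bounded_linear[of S]] by blast
  have "\<bar>qnorm2 S z\<bar> \<le> K * (norm z)^2" for z
  proof -
    have "\<bar>qnorm2 S z\<bar> \<le> norm z * norm (S *v z)"
      unfolding qnorm2_def by (rule Cauchy_Schwarz_ineq2)
    also have "\<dots> \<le> norm z * (norm z * K)" using K(2)[of z] by (simp add: mult_left_mono)
    finally show ?thesis by (simp add: power2_eq_square algebra_simps)
  qed
  with K show ?thesis by (intro exI[of _ K]) auto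
qed

lemma qnorm2_scale: "qnorm2 S (a *\<^sub>R z) = a^2 * qnorm2 S z"
  unfolding qnorm2_def by (simp add: matrix_vector_mult_scaleR power2_eq_square)

lemma posdef_lower:
  assumes "posdef (S::real^'n^'n)"
  shows "\<exists>c>0. \<forall>z. c * (norm z)^2 \<le> qnorm2 S z"
proof -
  have cont: "continuous_on (sphere 0 1) (\<lambda>z. qnorm2 S z)"
    unfolding qnorm2_def by (intro continuous_intros linear_continuous_on matrix_vector_mul_bounded_linear)
  obtain i :: 'n where True by blast
  have ne: "sphere (0::real^'n) 1 \<noteq> {}" using norm_axis_1[of i] unfolding sphere_def by (metis (mono_tags) dist_0_norm empty_iff mem_Collect_eq)
  obtain z0 where z0: "z0 \<in> sphere 0 1" "\<And>z. z \<in> sphere 0 1 \<Longrightarrow> qnorm2 S z0 \<le> qnorm2 S z"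
    using continuous_attains_inf[OF compact_sphere ne cont] by blast
  have pos: "qnorm2 S z0 > 0" using assms z0(1) unfolding posdef_def by (metis mem_sphere_0 norm_zero zero_neq_one)
  have "qnorm2 S z0 * (norm z)^2 \<le> qnorm2 S z" for z
  proof (cases "z = 0")
    case True then show ?thesis by (simp add: qnorm2_def)
  next
    case False
    let ?u = "(1 / norm z) *\<^sub>R z"
    have u: "?u \<in> sphere 0 1" using False by simp
    have "z = norm z *\<^sub>R ?u" using False by simp
    then have "qnorm2 S z = (norm z)^2 * qnorm2 S ?u" by (metis qnorm2_scale)
    with z0(2)[OF u] show ?thesis by (metis mult.commute mult_left_mono zero_le_power2)
  qed
  with pos show ?thesis by blast
qed

lemma posdef_nonneg: "posdef S \<Longrightarrow> qnorm2 S z \<ge> 0"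
  unfolding posdef_def by (cases "z = 0") (auto simp: qnorm2_def intro: less_imp_le)

lemma norm_diff_sq: "(norm (a - b))^2 \<le> 2 * (norm (a::'a::real_normed_vector))^2 + 2 * (norm b)^2"
proof -
  have "norm (a - b) \<le> norm a + norm b" by (rule norm_triangle_ineq4)
  then have "(norm (a - b))^2 \<le> (norm a + norm b)^2" by (simp add: power_mono)
  also have "\<dots> \<le> 2 * (norm a)^2 + 2 * (norm b)^2" by (smt (verit) sum_squares_ge_zero power2_sum power2_diff zero_le_power2 )
  finally show ?thesis .
qed


lemma aux_div: fixes p n a e m b N c S :: real
  assumes "p > 0" "p*n \<le> a*e*m + b*N + c*S"
  shows "n \<le> (a/p)*e*m + (b/p)*N + (c/p)*S"
proof -
  have "(a/p)*e*m + (b/p)*N + (c/p)*S = (a*e*m + b*N + c*S) / p" using assms(1) by (simp add: field_simps)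
  then show ?thesis using assms by (simp add: pos_le_divide_eq mult.commute)
qed

theorem proposition3:
  fixes f :: "real^'n \<Rightarrow> 'u::topological_space \<Rightarrow> real^'m \<Rightarrow> real^'n"
    and h :: "real^'n \<Rightarrow> 'u \<Rightarrow> real^'p"
    and X :: "(real^'n) set" and UU :: "'u set" and W :: "(real^'m) set" and V :: "(real^'p) set"
    and U :: "real^'n \<Rightarrow> real^'n \<Rightarrow> real"
    and P1 P2 :: "real^'n^'n" and Sw :: "real^'m^'m" and Sy :: "real^'p^'p"
    and \<eta> :: real
    and Q :: "real^'m^'m" and R :: "real^'p^'p"
    and t1 t2 :: nat
  assumes f_cont: "continuous_on (X \<times> UU \<times> W) (\<lambda>(x, u, w). f x u w)"
    and h_cont: "continuous_on (X \<times> UU) (\<lambda>(x, u). h x u)"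
    and W0: "0 \<in> W"
    and f_inv: "\<And>x u w. x \<in> X \<Longrightarrow> u \<in> UU \<Longrightarrow> w \<in> W \<Longrightarrow> f x u w \<in> X"
    and U_cont: "continuous_on (X \<times> X) (\<lambda>(x1, x2). U x1 x2)"
    and U_nonneg: "\<And>x1 x2. x1 \<in> X \<Longrightarrow> x2 \<in> X \<Longrightarrow> U x1 x2 \<ge> 0"
    and P1: "posdef P1" and P2: "posdef P2" and Sw: "posdef Sw" and Sy: "posdef Sy"
    and eta: "0 \<le> \<eta>" "\<eta> < 1"
    and U_bounds: "\<And>x1 x2. x1 \<in> X \<Longrightarrow> x2 \<in> X \<Longrightarrow>
        qnorm2 P1 (x1 - x2) \<le> U x1 x2 \<and> U x1 x2 \<le> qnorm2 P2 (x1 - x2)"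
    and U_decr: "\<And>x1 x2 u w1 w2. x1 \<in> X \<Longrightarrow> x2 \<in> X \<Longrightarrow> u \<in> UU \<Longrightarrow> w1 \<in> W \<Longrightarrow> w2 \<in> W \<Longrightarrow>
        U (f x1 u w1) (f x2 u w2) \<le> \<eta> * U x1 x2 + qnorm2 Sw (w1 - w2) + qnorm2 Sy (h x1 u - h x2 u)"
    and Q: "posdef Q" and R: "posdef R"
    and t12: "t1 \<le> t2"
  shows "\<exists>C1 C2 C3. C1 > 0 \<and> C2 > 0 \<and> C3 > 0 \<and>
    (\<forall>x xh u w wh v y. x 0 \<in> X \<and> xh 0 \<in> X \<and> (\<forall>j. u j \<in> UU) \<and> (\<forall>j. w j \<in> W) \<and>
        (\<forall>j. wh j \<in> W) \<and> (\<forall>j. v j \<in> V) \<and>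
        (\<forall>j. x (Suc j) = f (x j) (u j) (w j)) \<and> (\<forall>j. y j = h (x j) (u j) + v j) \<and>
        (\<forall>j. xh (Suc j) = f (xh j) (u j) (wh j)) \<longrightarrow>
      (\<forall>\<tau>\<in>{t1..t2}.
        (norm (x \<tau> - xh \<tau>))^2 \<le> C1 * \<eta> ^ (\<tau> - t1) * (norm (x t1 - xh t1))^2
          + C2 * noise_max w v t1 \<tau>
          + C3 * (\<Sum>j\<in>{t1..<t2}. qnorm2 Q (wh j) + qnorm2 R (y j - h (xh j) (u j)))))"
proof -
  obtain Kw where Kw: "Kw \<ge> 0" "\<And>z. \<bar>qnorm2 Sw z\<bar> \<le> Kw * (norm z)^2" using qnorm2_upper by blast
  obtain Ky where Ky: "Ky \<ge> 0" "\<And>z. \<bar>qnorm2 Sy z\<bar> \<le> Ky * (norm z)^2" using qnorm2_upper by blast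
  obtain p2 where p2: "p2 \<ge> 0" "\<And>z. \<bar>qnorm2 P2 z\<bar> \<le> p2 * (norm z)^2" using qnorm2_upper by blast
  obtain p1 where p1: "p1 > 0" "\<And>z. p1 * (norm z)^2 \<le> qnorm2 P1 z" using posdef_lower[OF P1] by blast
  obtain cQ where cQ: "cQ > 0" "\<And>z. cQ * (norm z)^2 \<le> qnorm2 Q z" using posdef_lower[OF Q] by blast
  obtain cR where cR: "cR > 0" "\<And>z. cR * (norm z)^2 \<le> qnorm2 R z" using posdef_lower[OF R] by blast
  define A where "A = 2 * Kw + 2 * Ky"
  define B where "B = 2 * Kw / cQ + 2 * Ky / cR"
  have A0: "A \<ge> 0" and B0: "B \<ge> 0" using Kw Ky cQ cR by (auto simp: A_def B_def)
  define C1 where "C1 = (p2 + 1) / p1"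
  define C2 where "C2 = (2 * A * real (t2 - t1) + 1) / p1"
  define C3 where "C3 = (B + 1) / p1"
  have "2 * A * real (t2 - t1) + 1 > 0" using A0 by (smt (verit) mult_nonneg_nonneg of_nat_0_le_iff)
  then have C: "C1 > 0" "C2 > 0" "C3 > 0" using p1 p2 A0 B0 by (auto simp: C1_def C2_def C3_def)
  show ?thesis
  proof (intro exI conjI allI impI ballI)
    show "C1 > 0" "C2 > 0" "C3 > 0" by (fact C)+
    fix x xh u w wh v y \<tau>
    assume H: "x 0 \<in> X \<and> xh 0 \<in> X \<and> (\<forall>j. u j \<in> UU) \<and> (\<forall>j. w j \<in> W) \<and>
        (\<forall>j. wh j \<in> W) \<and> (\<forall>j. v j \<in> V) \<and>
        (\<forall>j. x (Suc j) = f (x j) (u j) (w j)) \<and> (\<forall>j. y j = h (x j) (u j) + v j) \<and>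
        (\<forall>j. xh (Suc j) = f (xh j) (u j) (wh j))"
    assume tau: "\<tau> \<in> {t1..t2}"
    have xX: "x j \<in> X" for j by (induction j) (use H f_inv in auto)
    have xhX: "xh j \<in> X" for j by (induction j) (use H f_inv in auto)
    define e where "e j = U (x j) (xh j)" for j
    define tm where "tm j = qnorm2 Q (wh j) + qnorm2 R (y j - h (xh j) (u j))" for j
    have tm0: "tm j \<ge> 0" for j unfolding tm_def using posdef_nonneg[OF Q] posdef_nonneg[OF R] by (simp add: add_nonneg_nonneg)
    have step: "e (Suc j) \<le> \<eta> * e j + A * ((norm (w j))^2 + (norm (v j))^2) + B * tm j" for j
    proof -
      have d: "e (Suc j) \<le> \<eta> * e j + qnorm2 Sw (w j - wh j) + qnorm2 Sy (h (x j) (u j) - h (xh j) (u j))"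
        unfolding e_def using H U_decr[OF xX xhX, of "u j" "w j" "wh j"] by simp
      have a: "qnorm2 Sw (w j - wh j) \<le> Kw * (2 * (norm (w j))^2 + 2 * (norm (wh j))^2)"
        using Kw(2)[of "w j - wh j"] norm_diff_sq[of "w j" "wh j"] Kw(1)
        by (smt (verit) mult_left_mono)
      have a2: "(norm (wh j))^2 \<le> qnorm2 Q (wh j) / cQ" using cQ by (simp add: field_simps)
      have hy: "h (x j) (u j) - h (xh j) (u j) = (y j - h (xh j) (u j)) - v j" using H by simp
      have b: "qnorm2 Sy (h (x j) (u j) - h (xh j) (u j)) \<le> Ky * (2 * (norm (y j - h (xh j) (u j)))^2 + 2 * (norm (v j))^2)"
        unfolding hy using Ky(2)[of "y j - h (xh j) (u j) - v j"] norm_diff_sq[of "y j - h (xh j) (u j)" "v j"] Ky(1)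
        by (smt (verit) mult_left_mono)
      have b2: "(norm (y j - h (xh j) (u j)))^2 \<le> qnorm2 R (y j - h (xh j) (u j)) / cR" using cR by (simp add: field_simps)
      have "Kw * (2 * (norm (w j))^2 + 2 * (norm (wh j))^2) + Ky * (2 * (norm (y j - h (xh j) (u j)))^2 + 2 * (norm (v j))^2)
          \<le> A * ((norm (w j))^2 + (norm (v j))^2) + B * tm j"
      proof -
        have "Kw * (norm (wh j))^2 \<le> Kw * (qnorm2 Q (wh j) / cQ)" using a2 Kw(1) by (rule mult_left_mono)
        moreover have "Ky * (norm (y j - h (xh j) (u j)))^2 \<le> Ky * (qnorm2 R (y j - h (xh j) (u j)) / cR)" using b2 Ky(1) by (rule mult_left_mono)
        moreover have "0 \<le> Kw * (norm (w j))^2" "0 \<le> Ky * (norm (v j))^2" "0 \<le> Kw * (norm (v j))^2" "0 \<le> Ky * (norm (w j))^2"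
          using Kw(1) Ky(1) by auto
        moreover have "Ky * (qnorm2 Q (wh j) / cR) \<ge> 0" "Kw * (qnorm2 R (y j - h (xh j) (u j)) / cQ) \<ge> 0"
          using Kw(1) Ky(1) cQ(1) cR(1) posdef_nonneg[OF Q] posdef_nonneg[OF R] by auto
        moreover have "B * tm j = 2 * (Kw * (qnorm2 Q (wh j) / cQ)) + 2 * (Ky * (qnorm2 Q (wh j) / cR))
           + 2 * (Kw * (qnorm2 R (y j - h (xh j) (u j)) / cQ)) + 2 * (Ky * (qnorm2 R (y j - h (xh j) (u j)) / cR))"
          unfolding B_def tm_def by (simp add: algebra_simps add_divide_distrib)
        moreover have "A * ((norm (w j))^2 + (norm (v j))^2) = 2 * (Kw * (norm (w j))^2) + 2 * (Ky * (norm (w j))^2)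
           + 2 * (Kw * (norm (v j))^2) + 2 * (Ky * (norm (v j))^2)" unfolding A_def by (simp add: algebra_simps)
        ultimately show ?thesis by (simp only: distrib_left mult.left_commute[of Kw 2] mult.left_commute[of Ky 2])
      qed
      with d a b show ?thesis by linarith
    qed
    define N where "N = noise_max w v t1 \<tau>"
    have Nw: "(norm (w j))^2 \<le> N" and Nv: "(norm (v j))^2 \<le> N" if "t1 \<le> j" "j < \<tau>" for j
      using that unfolding N_def noise_max_def by (auto intro!: Max_ge)
    have claim: "k \<le> \<tau> - t1 \<Longrightarrow> e (t1 + k) \<le> \<eta> ^ k * e t1 + 2 * A * real k * N + B * (\<Sum>j\<in>{t1..<t1+k}. tm j)" for k
    proof (induction k)
      case 0 then show ?case by simp
    next
      case (Suc k)
      let ?j = "t1 + k"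
      have j: "t1 \<le> ?j" "?j < \<tau>" using Suc.prems by auto
      have N0: "N \<ge> 0" using Nw[OF j] by (meson order_trans zero_le_power2)
      have IH: "e ?j \<le> \<eta> ^ k * e t1 + 2 * A * real k * N + B * (\<Sum>j\<in>{t1..<t1+k}. tm j)" using Suc by simp
      have S0: "(\<Sum>j\<in>{t1..<t1+k}. tm j) \<ge> 0" using tm0 by (simp add: sum_nonneg)
      have "e (Suc ?j) \<le> \<eta> * e ?j + A * ((norm (w ?j))^2 + (norm (v ?j))^2) + B * tm ?j" by (rule step)
      also have "\<dots> \<le> \<eta> * (\<eta> ^ k * e t1 + 2 * A * real k * N + B * (\<Sum>j\<in>{t1..<t1+k}. tm j)) + A * (2 * N) + B * tm ?j"
        using IH eta(1) A0 B0 Nw[OF j] Nv[OF j] by (intro add_mono mult_left_mono) auto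
      also have "\<dots> \<le> \<eta> ^ Suc k * e t1 + 2 * A * real (Suc k) * N + B * (\<Sum>j\<in>{t1..<t1+Suc k}. tm j)"
      proof -
        have "\<eta> * (2 * A * real k * N) \<le> 2 * A * real k * N" using eta A0 N0
          by (simp add: mult_left_le_one_le)
        moreover have "\<eta> * (B * (\<Sum>j\<in>{t1..<t1+k}. tm j)) \<le> B * (\<Sum>j\<in>{t1..<t1+k}. tm j)" using eta B0 S0
          by (simp add: mult_left_le_one_le)
        ultimately show ?thesis by (simp add: algebra_simps)
      qed
      finally show ?case by simp
    qed
    define k where "k = \<tau> - t1"
    have tk: "\<tau> = t1 + k" using tau by (simp add: k_def)
    have ek: "e \<tau> \<le> \<eta> ^ k * e t1 + 2 * A * real k * N + B * (\<Sum>j\<in>{t1..<\<tau>}. tm j)"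
    proof -
      have kle: "k \<le> \<tau> - t1" by (simp add: k_def)
      show ?thesis using claim[OF kle] unfolding tk[symmetric] .
    qed
    have N0: "N \<ge> 0"
    proof (cases "\<tau> \<le> t1")
      case True then show ?thesis unfolding N_def noise_max_def by simp
    next
      case False then show ?thesis using Nw[of t1] by (meson order_trans zero_le_power2 not_le order_refl)
    qed
    have e1: "e t1 \<le> p2 * (norm (x t1 - xh t1))^2"
      using U_bounds[OF xX[of t1] xhX[of t1]] p2(2)[of "x t1 - xh t1"] unfolding e_def by linarith
    have et: "p1 * (norm (x \<tau> - xh \<tau>))^2 \<le> e \<tau>"
      using U_bounds[OF xX[of \<tau>] xhX[of \<tau>]] p1(2)[of "x \<tau> - xh \<tau>"] unfolding e_def by linarith
    have Ssub: "(\<Sum>j\<in>{t1..<\<tau>}. tm j) \<le> (\<Sum>j\<in>{t1..<t2}. tm j)"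
      using tau tm0 by (intro sum_mono2) auto
    have ek2: "real k \<le> real (t2 - t1)" using tau by (simp add: k_def)
    have "p1 * (norm (x \<tau> - xh \<tau>))^2 \<le> (p2 + 1) * \<eta> ^ k * (norm (x t1 - xh t1))^2 + (2 * A * real (t2 - t1) + 1) * N + (B + 1) * (\<Sum>j\<in>{t1..<t2}. tm j)"
    proof -
      have "\<eta> ^ k * e t1 \<le> \<eta> ^ k * (p2 * (norm (x t1 - xh t1))^2)" using e1 eta by (simp add: mult_left_mono)
      also have "\<dots> \<le> (p2 + 1) * \<eta> ^ k * (norm (x t1 - xh t1))^2" using eta by (simp add: algebra_simps)
      finally have 1: "\<eta> ^ k * e t1 \<le> (p2 + 1) * \<eta> ^ k * (norm (x t1 - xh t1))^2" .
      have 2: "2 * A * real k * N \<le> (2 * A * real (t2 - t1) + 1) * N"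
      proof -
        have "2 * A * real k * N \<le> 2 * A * real (t2 - t1) * N"
          using ek2 A0 N0 by (intro mult_right_mono mult_left_mono) auto
        then show ?thesis using N0 by (simp add: algebra_simps)
      qed
      have 3: "B * (\<Sum>j\<in>{t1..<\<tau>}. tm j) \<le> (B + 1) * (\<Sum>j\<in>{t1..<t2}. tm j)"
      proof -
        have "B * (\<Sum>j\<in>{t1..<\<tau>}. tm j) \<le> B * (\<Sum>j\<in>{t1..<t2}. tm j)" using Ssub B0 by (rule mult_left_mono)
        moreover have "(\<Sum>j\<in>{t1..<t2}. tm j) \<ge> 0" using tm0 by (simp add: sum_nonneg)
        ultimately show ?thesis by (simp add: distrib_right)
      qed
      show ?thesis using et ek 1 2 3 by linarith
    qed
    from aux_div[OF p1(1) this] show "(norm (x \<tau> - xh \<tau>))^2 \<le> C1 * \<eta> ^ (\<tau> - t1) * (norm (x t1 - xh t1))^2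
          + C2 * noise_max w v t1 \<tau>
          + C3 * (\<Sum>j\<in>{t1..<t2}. qnorm2 Q (wh j) + qnorm2 R (y j - h (xh j) (u j)))"
      unfolding C1_def C2_def C3_def N_def k_def tm_def .
  qed
qed

end
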